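(* For every integer $n\ge r+1$, $c_n(\alpha,\alpha^2,0)=0$ (i.e. the polynomial $c_n(\alpha,\beta,0)$ vanishes when $\beta=\alpha^2$).
   Context: Fix an integer $r\ge1$ and indeterminates $\alpha,\beta,\gamma$. Define polynomials $c_n=c_n(\alpha,\beta,\gamma)\in\mathbb{Q}[\alpha,\beta,\gamma]$ by $c_n=0$ for $n<0$, $c_0=1$, and for every integer $n\ge-3$, $$(n+4)c_{n+4}+(2n+6-r)\alpha c_{n+3}+\left[(n+2-r)\alpha^2+(2n+5-2r)\frac{\alpha^2-\beta}{4}\right]c_{n+2}+\left[(2n+3-3r)\alpha\frac{\alpha^2-\beta}{4}+\frac{\gamma}{2}\right]c_{n+1}+\frac{1}{16}(\alpha^2-\beta)^2(n+1-2r)c_n=0.$$ *)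

theory Defs
  imports Complex_Main
begin

text \<open>The polynomials c_n(alpha,beta,gamma) evaluated at elements a, b, g of an
arbitrary field of characteristic 0.  Index k of cseq is c_k (k >= 0); c_k = 0 for
k < 0 is handled by the guards.  The defining equation for c_{Suc m} is the
recurrence with n = Suc m - 4 (n >= -3), solved for c_{n+4}.\<close>

fun cseq :: "nat \<Rightarrow> 'a::field_char_0 \<Rightarrow> 'a \<Rightarrow> 'a \<Rightarrow> nat \<Rightarrow> 'a" where
  "cseq r a b g 0 = 1"
| "cseq r a b g (Suc m) =
     (let n = int (Suc m) - 4;
          R = int r;
          c3 = cseq r a b g m;
          c2 = (if m \<ge> 1 then cseq r a b g (m - 1) else 0);
          c1 = (if m \<ge> 2 then cseq r a b g (m - 2) else 0);
          c0 = (if m \<ge> 3 then cseq r a b g (m - 3) else 0)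
      in - ( of_int (2*n + 6 - R) * a * c3
           + (of_int (n + 2 - R) * a^2 + of_int (2*n + 5 - 2*R) * ((a^2 - b) / 4)) * c2
           + (of_int (2*n + 3 - 3*R) * a * ((a^2 - b) / 4) + g / 2) * c1
           + (1/16) * (a^2 - b)^2 * of_int (n + 1 - 2*R) * c0 )
         / of_nat (Suc m))"

end

theory Submission
  imports Defs
begin

lemma absA: "(r - k) * (r choose k) = Suc k * (r choose Suc k)"
  by (metis binomial_absorb_comp binomial_absorption)

lemma absI: "int (r choose k) * (int r - int k) = int (Suc k) * int (r choose Suc k)"
proof (cases "k \<le> r")
  case True
  then have "int ((r - k) * (r choose k)) = int (Suc k * (r choose Suc k))" using absA by metis
  then show ?thesis using True by (simp add: of_nat_diff algebra_simps)
next
  case False then show ?thesis by (simp add: binomial_eq_0)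
qed

lemma binom_id:
  fixes r m :: nat assumes "m \<ge> 2"
  shows "int m * int (r choose m) = - (2*int m - 2 - int r) * int (r choose (m-1))
          - (int m - 2 - int r) * int (r choose (m-2))"
proof -
  obtain k where k: "m = Suc (Suc k)" using assms by (metis add_2_eq_Suc le_Suc_ex)
  have e1: "int (r choose Suc k) * (int r - int (Suc k)) = int m * int (r choose m)"
    using absI[of r "Suc k"] k by simp
  have e2: "int (r choose k) * (int r - int k) = int (Suc k) * int (r choose Suc k)"
    using absI[of r k] .
  show ?thesis using e1 e2 k by (simp add: algebra_simps)
qed

lemma cseq_closed:
  fixes a :: "'a::field_char_0"
  shows "cseq r a (a^2) 0 n = of_nat (r choose n) * a^n"
proof (induction n rule: less_induct)
  case (less n)
  show ?case
  proof (cases n)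
    case 0 then show ?thesis by simp
  next
    case (Suc m)
    show ?thesis
    proof (cases m)
      case 0
      then show ?thesis using Suc less[of 0] by (simp add: Let_def field_simps)
    next
      case (Suc j)
      have h1: "cseq r a (a^2) 0 m = of_nat (r choose m) * a^m" using less \<open>n = Suc m\<close> by simp
      have h2: "cseq r a (a^2) 0 (m-1) = of_nat (r choose (m-1)) * a^(m-1)" using less \<open>n = Suc m\<close> by simp
      have id: "of_int (int n * int (r choose n)) = (of_int (- (2*int n - 2 - int r) * int (r choose (n-1))
          - (int n - 2 - int r) * int (r choose (n-2))) :: 'a)"
        using binom_id[of n r] \<open>n = Suc m\<close> Suc by simp
      have id2: "of_nat n * of_nat (r choose n) = - (2*of_nat n - 2 - of_nat r) * of_nat (r choose m)
          - (of_nat n - 2 - of_nat r) * (of_nat (r choose j) :: 'a)"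
        using id \<open>n = Suc m\<close> Suc by simp
      have "cseq r a (a^2) 0 n = - (of_int (2*(int n - 4) + 6 - int r) * a * (of_nat (r choose m) * a^m)
           + of_int (int n - 4 + 2 - int r) * a^2 * (of_nat (r choose j) * a^j)) / of_nat n"
        using h1 h2 \<open>n = Suc m\<close> Suc by (simp add: Let_def)
      also have "\<dots> = - ((2*of_nat n - 2 - of_nat r) * of_nat (r choose m)
           + (of_nat n - 2 - of_nat r) * (of_nat (r choose j) :: 'a)) * a^n / of_nat n"
        using \<open>n = Suc m\<close> Suc by (simp add: algebra_simps power2_eq_square)
      also have "\<dots> = (of_nat n * of_nat (r choose n)) * a^n / of_nat n"
        by (subst id2) (simp add: algebra_simps)
      also have "\<dots> = of_nat (r choose n) * a^n"
        using \<open>n = Suc m\<close> by (simp del: of_nat_Suc)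
      finally show ?thesis .
    qed
  qed
qed

theorem corollary3p5:
  fixes r n :: nat and \<alpha> :: "'a::field_char_0"
  assumes "r \<ge> 1" and "n \<ge> r + 1"
  shows "cseq r \<alpha> (\<alpha>^2) 0 n = 0"
  using cseq_closed[of r \<alpha> n] assms by simp

end
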